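(* $\mathfrak{b}_{\mathrm{game}}^{\mathrm{I}} = \mathfrak{b}$, where $\mathfrak{b}$ is the bounding number.
   Context: For $x,y\in\omega^\omega$, $x\le^* y$ means $x(n)\le y(n)$ for all but finitely many $n$. $\mathfrak{b}$ is the least size of a family $\mathcal{A}\subseteq\omega^\omega$ such that no single $x\in\omega^\omega$ satisfies $y\le^* x$ for all $y\in\mathcal{A}$. For $\mathcal{A}\subseteq\omega^\omega$, the bounding game with respect to $\mathcal{A}$ is the infinite two-player game in which, at round $k$, Player I plays $n_k\in\omega$ and then Player II plays $i_k\in\{0,1\}$. Player II wins iff $i_k=1$ for infinitely many $k$ and there is $g\in\mathcal{A}$ with $\{k\in\omega: i_k=1\}=\{k\in\omega: n_k<g(k)\}$. $\mathfrak{b}_{\mathrm{game}}^{\mathrm{I}}$ is the least $|\mathcal{A}|$ such that Player I has no winning strategy in the bounding game with respect to $\mathcal{A}$. *)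

theory Defs
  imports Main
begin

definition le_star :: "(nat \<Rightarrow> nat) \<Rightarrow> (nat \<Rightarrow> nat) \<Rightarrow> bool" where
  "le_star x y \<longleftrightarrow> finite {n. \<not> x n \<le> y n}"

definition unbounded_family :: "(nat \<Rightarrow> nat) set \<Rightarrow> bool" where
  "unbounded_family A \<longleftrightarrow> \<not> (\<exists>x. \<forall>y\<in>A. le_star y x)"

text \<open>A strategy for Player I maps the finite history of the play so far
 (list of pairs (n_j, i_j), j < k) to the move n_k. Player II's moves are
 given as a sequence of booleans (True = 1, False = 0).\<close>
type_synonym stratI = "(nat \<times> bool) list \<Rightarrow> nat"

fun history :: "stratI \<Rightarrow> (nat \<Rightarrow> bool) \<Rightarrow> nat \<Rightarrow> (nat \<times> bool) list" where
  "history \<sigma> i 0 = []"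
| "history \<sigma> i (Suc k) = history \<sigma> i k @ [(\<sigma> (history \<sigma> i k), i k)]"

definition movesI :: "stratI \<Rightarrow> (nat \<Rightarrow> bool) \<Rightarrow> nat \<Rightarrow> nat" where
  "movesI \<sigma> i k = \<sigma> (history \<sigma> i k)"

definition II_wins :: "(nat \<Rightarrow> nat) set \<Rightarrow> (nat \<Rightarrow> nat) \<Rightarrow> (nat \<Rightarrow> bool) \<Rightarrow> bool" where
  "II_wins A n i \<longleftrightarrow> infinite {k. i k} \<and> (\<exists>g\<in>A. {k. i k} = {k. n k < g k})"

definition winning_stratI :: "(nat \<Rightarrow> nat) set \<Rightarrow> stratI \<Rightarrow> bool" where
  "winning_stratI A \<sigma> \<longleftrightarrow> (\<forall>i. \<not> II_wins A (movesI \<sigma> i) i)"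

definition I_no_winning :: "(nat \<Rightarrow> nat) set \<Rightarrow> bool" where
  "I_no_winning A \<longleftrightarrow> \<not> (\<exists>\<sigma>. winning_stratI A \<sigma>)"

end

theory Submission
  imports Defs
begin

lemma history_cong: "(\<And>j. j < k \<Longrightarrow> i j = i' j) \<Longrightarrow> history \<sigma> i k = history \<sigma> i' k"
  by (induction k) auto

lemma length_history[simp]: "length (history \<sigma> i k) = k"
  by (induction k) auto

definition Hb :: "stratI \<Rightarrow> nat \<Rightarrow> nat" where
  "Hb \<sigma> k = Max (range (\<lambda>i. movesI \<sigma> i k))"

lemma Hb_fin: "finite (range (\<lambda>i. movesI \<sigma> i k))"
proof -
  have "range (\<lambda>i. movesI \<sigma> i k) \<subseteq> (\<lambda>bs. movesI \<sigma> (\<lambda>j. bs ! j) k) ` {bs. length bs = k}"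
  proof
    fix x assume "x \<in> range (\<lambda>i. movesI \<sigma> i k)"
    then obtain i where x: "x = movesI \<sigma> i k" by auto
    have "history \<sigma> i k = history \<sigma> (\<lambda>j. map i [0..<k] ! j) k"
      by (rule history_cong) simp
    then have "x = movesI \<sigma> (\<lambda>j. map i [0..<k] ! j) k" using x by (simp add: movesI_def)
    then show "x \<in> (\<lambda>bs. movesI \<sigma> (\<lambda>j. bs ! j) k) ` {bs. length bs = k}" by force
  qed
  moreover have "finite {bs::bool list. length bs = k}"
    using finite_lists_length_eq[of "UNIV::bool set"] by simp
  ultimately show ?thesis using finite_subset by blast
qed

lemma Hb_ge: "movesI \<sigma> i k \<le> Hb \<sigma> k"
  unfolding Hb_def using Hb_fin by (intro Max_ge) auto

fun hg :: "stratI \<Rightarrow> (nat \<Rightarrow> nat) \<Rightarrow> nat \<Rightarrow> (nat \<times> bool) list" where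
  "hg \<sigma> g 0 = []"
| "hg \<sigma> g (Suc k) = hg \<sigma> g k @ [(\<sigma> (hg \<sigma> g k), \<sigma> (hg \<sigma> g k) < g k)]"

lemma history_hg: "history \<sigma> (\<lambda>k. \<sigma> (hg \<sigma> g k) < g k) k = hg \<sigma> g k"
  by (induction k) auto

lemma unb_imp: "unbounded_family A \<Longrightarrow> I_no_winning A"
  unfolding I_no_winning_def winning_stratI_def
proof clarsimp
  fix \<sigma> assume u: "unbounded_family A"
  then obtain g where g: "g \<in> A" "\<not> le_star g (Hb \<sigma>)"
    unfolding unbounded_family_def by blast
  define i where "i = (\<lambda>k. \<sigma> (hg \<sigma> g k) < g k)"
  have mv: "movesI \<sigma> i k = \<sigma> (hg \<sigma> g k)" for k
    unfolding movesI_def i_def history_hg ..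
  have eq: "{k. i k} = {k. movesI \<sigma> i k < g k}" using mv by (simp add: i_def)
  have "{k. \<not> g k \<le> Hb \<sigma> k} \<subseteq> {k. i k}"
    using Hb_ge[of \<sigma> i] eq by (auto, meson le_less_trans not_le)
  moreover have "infinite {k. \<not> g k \<le> Hb \<sigma> k}" using g(2) unfolding le_star_def .
  ultimately have "infinite {k. i k}" using finite_subset by blast
  then show "\<exists>i. II_wins A (movesI \<sigma> i) i"
    unfolding II_wins_def using g(1) eq by blast
qed

lemma imp_unb: "I_no_winning A \<Longrightarrow> unbounded_family A"
proof (rule ccontr)
  assume a: "I_no_winning A" "\<not> unbounded_family A"
  then obtain x where x: "\<forall>y\<in>A. le_star y x" unfolding unbounded_family_def by blast
  have "winning_stratI A (\<lambda>h. x (length h))"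
    unfolding winning_stratI_def II_wins_def movesI_def
    using x unfolding le_star_def by (auto simp: not_le)
  then show False using a(1) unfolding I_no_winning_def by blast
qed

lemma equiv: "I_no_winning A \<longleftrightarrow> unbounded_family A"
  using unb_imp imp_unb by blast

theorem mainTheorem1:
  shows "\<exists>A B. unbounded_family A
             \<and> (\<forall>A'. unbounded_family A' \<longrightarrow> (card_of A, card_of A') \<in> ordLeq)
             \<and> I_no_winning B
             \<and> (\<forall>B'. I_no_winning B' \<longrightarrow> (card_of B, card_of B') \<in> ordLeq)
             \<and> (card_of A, card_of B) \<in> ordIso"
proof -
  let ?R = "{card_of A | A. unbounded_family A}"
  have "unbounded_family UNIV"
    unfolding unbounded_family_def le_star_def
  proof (rule notI, elim exE)
    fix x :: "nat \<Rightarrow> nat" assume "\<forall>y\<in>UNIV. finite {n. \<not> y n \<le> x n}"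
    then have "finite {n. \<not> Suc (x n) \<le> x n}" by (drule_tac x="\<lambda>m. Suc (x m)" in bspec) simp_all
    then show False by simp
  qed
  then have ne: "?R \<noteq> {}" by blast
  have "\<forall>r\<in>?R. Card_order r" using card_of_Card_order by blast
  then obtain r where r: "r \<in> ?R" "\<forall>r'\<in>?R. (r, r') \<in> ordLeq"
    using exists_minim_Card_order[OF ne] by blast
  then obtain A where A: "r = card_of A" "unbounded_family A" by blast
  have m: "\<forall>A'. unbounded_family A' \<longrightarrow> (card_of A, card_of A') \<in> ordLeq"
    using r(2) A(1) by blast
  show ?thesis
    apply (rule exI[of _ A], rule exI[of _ A])
    using A(2) m equiv card_of_refl by blast
qed

end
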